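(* Let $k$ be a field of characteristic $0$ and $V$ a $k$-module. The free commutative trialgebra on $V$ is the module $\bar S(V)\otimes S(V)$ (with $V\hookrightarrow\bar S(V)\otimes S(V)$, $v\mapsto v\otimes1$) equipped with the operations $$(x_1\cdots x_k\otimes y_1\cdots y_l)*(x'_1\cdots x'_m\otimes y'_1\cdots y'_n)=x_1\cdots x_k\otimes y_1\cdots y_l\,x'_1\cdots x'_m\,y'_1\cdots y'_n,$$ $$(x_1\cdots x_k\otimes y_1\cdots y_l)\bullet(x'_1\cdots x'_m\otimes y'_1\cdots y'_n)=x_1\cdots x_k\,x'_1\cdots x'_m\otimes y_1\cdots y_l\,y'_1\cdots y'_n.$$
   Context: $S(V)$ denotes the symmetric algebra on $V$ and $\bar S(V)=\bigoplus_{n\ge1}S^n(V)$ its augmentation ideal. A commutative trialgebra is a $k$-module $A$ with two binary operations $*$ and $\bullet$ such that $(x*y)*z=x*(y*z)=x*(z*y)$; $x\bullet y=y\bullet x$, $(x\bullet y)\bullet z=x\bullet(y\bullet z)$; and $x*(y\bullet z)=x*(y*z)$, $(x\bullet y)*z=x\bullet(y*z)$. "Free" means: for every commutative trialgebra $T$ and linear map $f:V\to T$ there is a unique morphism of commutative trialgebras extending $f$. *)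

theory Defs
  imports Main "HOL-Library.Poly_Mapping"
begin

definition bilinear_on ::
  "('k::comm_ring_1 \<Rightarrow> 'a::ab_group_add \<Rightarrow> 'a) \<Rightarrow> 'a set \<Rightarrow> ('a \<Rightarrow> 'a \<Rightarrow> 'a) \<Rightarrow> bool" where
  "bilinear_on s C m \<longleftrightarrow>
     (\<forall>x\<in>C. \<forall>y\<in>C. \<forall>z\<in>C. m (x + y) z = m x z + m y z \<and> m x (y + z) = m x y + m x z) \<and>
     (\<forall>c. \<forall>x\<in>C. \<forall>y\<in>C. m (s c x) y = s c (m x y) \<and> m x (s c y) = s c (m x y))"

definition comm_trialgebra ::
  "('k::comm_ring_1 \<Rightarrow> 'a::ab_group_add \<Rightarrow> 'a) \<Rightarrow> 'a set \<Rightarrow> ('a \<Rightarrow> 'a \<Rightarrow> 'a) \<Rightarrow> ('a \<Rightarrow> 'a \<Rightarrow> 'a) \<Rightarrow> bool" where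
  "comm_trialgebra s C m d \<longleftrightarrow>
     (\<forall>a b. \<forall>x\<in>C. \<forall>y\<in>C. s a (x + y) = s a x + s a y \<and> s (a + b) x = s a x + s b x \<and>
        s a (s b x) = s (a * b) x \<and> s 1 x = x) \<and>
     0 \<in> C \<and> (\<forall>x\<in>C. \<forall>y\<in>C. x + y \<in> C) \<and> (\<forall>c. \<forall>x\<in>C. s c x \<in> C) \<and>
     (\<forall>x\<in>C. \<forall>y\<in>C. m x y \<in> C \<and> d x y \<in> C) \<and>
     bilinear_on s C m \<and> bilinear_on s C d \<and>
     (\<forall>x\<in>C. \<forall>y\<in>C. \<forall>z\<in>C.
        m (m x y) z = m x (m y z) \<and> m x (m y z) = m x (m z y) \<and>
        d x y = d y x \<and> d (d x y) z = d x (d y z) \<and>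
        m x (d y z) = m x (m y z) \<and> m (d x y) z = d x (m y z))"

definition trialgebra_hom ::
  "('k::comm_ring_1 \<Rightarrow> 'a::ab_group_add \<Rightarrow> 'a) \<Rightarrow> 'a set \<Rightarrow> ('a \<Rightarrow> 'a \<Rightarrow> 'a) \<Rightarrow> ('a \<Rightarrow> 'a \<Rightarrow> 'a) \<Rightarrow>
   ('k \<Rightarrow> 'b::ab_group_add \<Rightarrow> 'b) \<Rightarrow> 'b set \<Rightarrow> ('b \<Rightarrow> 'b \<Rightarrow> 'b) \<Rightarrow> ('b \<Rightarrow> 'b \<Rightarrow> 'b) \<Rightarrow>
   ('a \<Rightarrow> 'b) \<Rightarrow> bool" where
  "trialgebra_hom s1 C1 m1 d1 s2 C2 m2 d2 h \<longleftrightarrow>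
     (\<forall>x\<in>C1. h x \<in> C2) \<and>
     (\<forall>x\<in>C1. \<forall>y\<in>C1. h (x + y) = h x + h y) \<and>
     (\<forall>c. \<forall>x\<in>C1. h (s1 c x) = s2 c (h x)) \<and>
     (\<forall>x\<in>C1. \<forall>y\<in>C1. h (m1 x y) = m2 (h x) (h y) \<and> h (d1 x y) = d2 (h x) (h y))"

text \<open>V is the k-vector space with basis 'b, i.e. finitely supported functions 'b \<Rightarrow> k.\<close>

definition smult_pm :: "'k::comm_ring_1 \<Rightarrow> ('i \<Rightarrow>\<^sub>0 'k) \<Rightarrow> ('i \<Rightarrow>\<^sub>0 'k)" where
  "smult_pm c p = Poly_Mapping.map (\<lambda>a. c * a) p"

text \<open>S(V) \<otimes> S(V) is the polynomial ring in two copies of the basis variables: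
a monomial (m, n) stands for  x^m \<otimes> y^n, with x^m, y^n monomials in the basis of V.
Sbar(V) \<otimes> S(V) is spanned by the monomials with m \<noteq> 0 (positive degree in the first factor).\<close>

type_synonym ('b, 'k) tri = "(('b \<Rightarrow>\<^sub>0 nat) \<times> ('b \<Rightarrow>\<^sub>0 nat)) \<Rightarrow>\<^sub>0 'k"

definition tri_carrier :: "('b, 'k::comm_ring_1) tri set" where
  "tri_carrier = {p. \<forall>mn \<in> Poly_Mapping.keys p. fst mn \<noteq> 0}"

definition bilin_ext ::
  "('i \<Rightarrow> 'i \<Rightarrow> 'i) \<Rightarrow> ('i \<Rightarrow>\<^sub>0 'k::comm_ring_1) \<Rightarrow> ('i \<Rightarrow>\<^sub>0 'k) \<Rightarrow> ('i \<Rightarrow>\<^sub>0 'k)" where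
  "bilin_ext f p q = (\<Sum>a\<in>Poly_Mapping.keys p. \<Sum>b\<in>Poly_Mapping.keys q.
       Poly_Mapping.single (f a b) (Poly_Mapping.lookup p a * Poly_Mapping.lookup q b))"

definition tri_star :: "('b, 'k::comm_ring_1) tri \<Rightarrow> ('b, 'k) tri \<Rightarrow> ('b, 'k) tri" where
  "tri_star = bilin_ext (\<lambda>(m, n) (m', n'). (m, n + m' + n'))"

definition tri_bullet :: "('b, 'k::comm_ring_1) tri \<Rightarrow> ('b, 'k) tri \<Rightarrow> ('b, 'k) tri" where
  "tri_bullet = bilin_ext (\<lambda>(m, n) (m', n'). (m + m', n + n'))"

definition tri_incl :: "('b \<Rightarrow>\<^sub>0 'k::comm_ring_1) \<Rightarrow> ('b, 'k) tri" where
  "tri_incl v = (\<Sum>b\<in>Poly_Mapping.keys v. Poly_Mapping.single (Poly_Mapping.single b 1, 0) (Poly_Mapping.lookup v b))"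

end

theory Submission
  imports Defs "HOL-Library.Multiset"
begin


lemma lookup_smult_pm [simp]: "Poly_Mapping.lookup (smult_pm c p) k = c * Poly_Mapping.lookup p k"
  by (simp add: smult_pm_def map.rep_eq when_def)

lemma keys_smult_pm: "Poly_Mapping.keys (smult_pm c p) \<subseteq> Poly_Mapping.keys p"
  by (auto simp: in_keys_iff)

lemma smult_pm_single [simp]: "smult_pm c (Poly_Mapping.single k a) = Poly_Mapping.single k (c * a)"
  by (rule poly_mapping_eqI) (simp add: lookup_single when_def)

lemma smult_pm_add: "smult_pm c (p + q) = smult_pm c p + smult_pm c q"
  by (rule poly_mapping_eqI) (simp add: lookup_add algebra_simps)

lemma smult_pm_sum: "smult_pm c (sum F I) = (\<Sum>i\<in>I. smult_pm c (F i))"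
  by (rule poly_mapping_eqI) (simp add: lookup_sum sum_distrib_left)

lemma bilin_ext_sup:
  assumes "finite A" "Poly_Mapping.keys p \<subseteq> A" "finite B" "Poly_Mapping.keys q \<subseteq> B"
  shows "bilin_ext f p q = (\<Sum>a\<in>A. \<Sum>b\<in>B.
       Poly_Mapping.single (f a b) (Poly_Mapping.lookup p a * Poly_Mapping.lookup q b))"
proof -
  have "(\<Sum>a\<in>A. \<Sum>b\<in>B. Poly_Mapping.single (f a b) (Poly_Mapping.lookup p a * Poly_Mapping.lookup q b))
     = (\<Sum>a\<in>Poly_Mapping.keys p. \<Sum>b\<in>B. Poly_Mapping.single (f a b) (Poly_Mapping.lookup p a * Poly_Mapping.lookup q b))"
    by (rule sum.mono_neutral_right) (use assms in \<open>auto simp: in_keys_iff\<close>)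
  also have "\<dots> = (\<Sum>a\<in>Poly_Mapping.keys p. \<Sum>b\<in>Poly_Mapping.keys q. Poly_Mapping.single (f a b) (Poly_Mapping.lookup p a * Poly_Mapping.lookup q b))"
    by (intro sum.cong refl sum.mono_neutral_right) (use assms in \<open>auto simp: in_keys_iff\<close>)
  finally show ?thesis by (simp add: bilin_ext_def)
qed

lemma bilin_ext_add_left: "bilin_ext f (p + p') q = bilin_ext f p q + bilin_ext f p' q"
proof -
  let ?A = "Poly_Mapping.keys p \<union> Poly_Mapping.keys p' \<union> Poly_Mapping.keys (p + p')"
  show ?thesis
    apply (subst (1 2 3) bilin_ext_sup[where A = ?A and B = "Poly_Mapping.keys q"])
    apply (auto simp: lookup_add algebra_simps single_add sum.distrib)
    done
qed

lemma bilin_ext_add_right: "bilin_ext f p (q + q') = bilin_ext f p q + bilin_ext f p q'"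
proof -
  let ?B = "Poly_Mapping.keys q \<union> Poly_Mapping.keys q' \<union> Poly_Mapping.keys (q + q')"
  show ?thesis
    apply (subst (1 2 3) bilin_ext_sup[where B = ?B and A = "Poly_Mapping.keys p"])
    apply (auto simp: lookup_add algebra_simps single_add sum.distrib)
    done
qed

lemma bilin_ext_zero_left [simp]: "bilin_ext f 0 q = 0"
  by (simp add: bilin_ext_def)
lemma bilin_ext_zero_right [simp]: "bilin_ext f p 0 = 0"
  by (simp add: bilin_ext_def)

lemma bilin_ext_sum_left: "bilin_ext f (sum F I) q = (\<Sum>i\<in>I. bilin_ext f (F i) q)"
  by (induction I rule: infinite_finite_induct) (auto simp: bilin_ext_add_left)
lemma bilin_ext_sum_right: "bilin_ext f p (sum F I) = (\<Sum>i\<in>I. bilin_ext f p (F i))"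
  by (induction I rule: infinite_finite_induct) (auto simp: bilin_ext_add_right)

lemma bilin_ext_single_left:
  "bilin_ext f (Poly_Mapping.single a c) q = (\<Sum>b\<in>Poly_Mapping.keys q. Poly_Mapping.single (f a b) (c * Poly_Mapping.lookup q b))"
  by (subst bilin_ext_sup[where A = "{a}" and B = "Poly_Mapping.keys q"]) auto

lemma bilin_ext_single_right:
  "bilin_ext f p (Poly_Mapping.single b c) = (\<Sum>a\<in>Poly_Mapping.keys p. Poly_Mapping.single (f a b) (Poly_Mapping.lookup p a * c))"
  by (subst bilin_ext_sup[where B = "{b}" and A = "Poly_Mapping.keys p"]) auto

lemma bilin_ext_smult_left: "bilin_ext f (smult_pm c p) q = smult_pm c (bilin_ext f p q)"
  apply (subst (1 2) bilin_ext_sup[where A = "Poly_Mapping.keys p" and B = "Poly_Mapping.keys q"])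
  apply (auto simp: keys_smult_pm smult_pm_sum mult.assoc)
  done

lemma bilin_ext_smult_right: "bilin_ext f p (smult_pm c q) = smult_pm c (bilin_ext f p q)"
  apply (subst (1 2) bilin_ext_sup[where A = "Poly_Mapping.keys p" and B = "Poly_Mapping.keys q"])
  apply (auto simp: keys_smult_pm smult_pm_sum algebra_simps)
  done

lemma bilin_ext_triple_left:
  "bilin_ext f (bilin_ext g p q) r = (\<Sum>a\<in>Poly_Mapping.keys p. \<Sum>b\<in>Poly_Mapping.keys q. \<Sum>c\<in>Poly_Mapping.keys r.
     Poly_Mapping.single (f (g a b) c) (Poly_Mapping.lookup p a * Poly_Mapping.lookup q b * Poly_Mapping.lookup r c))"
  by (simp add: bilin_ext_def[of g] bilin_ext_sum_left bilin_ext_single_left mult.assoc)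

lemma bilin_ext_triple_right:
  "bilin_ext f p (bilin_ext g q r) = (\<Sum>a\<in>Poly_Mapping.keys p. \<Sum>b\<in>Poly_Mapping.keys q. \<Sum>c\<in>Poly_Mapping.keys r.
     Poly_Mapping.single (f a (g b c)) (Poly_Mapping.lookup p a * Poly_Mapping.lookup q b * Poly_Mapping.lookup r c))"
proof -
  have "bilin_ext f p (bilin_ext g q r) = (\<Sum>b\<in>Poly_Mapping.keys q. \<Sum>c\<in>Poly_Mapping.keys r. \<Sum>a\<in>Poly_Mapping.keys p.
     Poly_Mapping.single (f a (g b c)) (Poly_Mapping.lookup p a * Poly_Mapping.lookup q b * Poly_Mapping.lookup r c))"
    by (simp add: bilin_ext_def[of g] bilin_ext_sum_right bilin_ext_single_right mult.assoc)
  also have "\<dots> = (\<Sum>b\<in>Poly_Mapping.keys q. \<Sum>a\<in>Poly_Mapping.keys p. \<Sum>c\<in>Poly_Mapping.keys r.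
     Poly_Mapping.single (f a (g b c)) (Poly_Mapping.lookup p a * Poly_Mapping.lookup q b * Poly_Mapping.lookup r c))"
    by (rule sum.cong[OF refl], rule sum.swap)
  also have "\<dots> = (\<Sum>a\<in>Poly_Mapping.keys p. \<Sum>b\<in>Poly_Mapping.keys q. \<Sum>c\<in>Poly_Mapping.keys r.
     Poly_Mapping.single (f a (g b c)) (Poly_Mapping.lookup p a * Poly_Mapping.lookup q b * Poly_Mapping.lookup r c))"
    by (rule sum.swap)
  finally show ?thesis .
qed

lemma keys_bilin_ext: "Poly_Mapping.keys (bilin_ext f p q) \<subseteq> (\<lambda>(a,b). f a b) ` (Poly_Mapping.keys p \<times> Poly_Mapping.keys q)"
proof -
  have "Poly_Mapping.keys (bilin_ext f p q) \<subseteq> (\<Union>a\<in>Poly_Mapping.keys p. Poly_Mapping.keys (\<Sum>b\<in>Poly_Mapping.keys q.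
       Poly_Mapping.single (f a b) (Poly_Mapping.lookup p a * Poly_Mapping.lookup q b)))"
    unfolding bilin_ext_def by (rule keys_sum)
  also have "\<dots> \<subseteq> (\<Union>a\<in>Poly_Mapping.keys p. \<Union>b\<in>Poly_Mapping.keys q. Poly_Mapping.keys (
       Poly_Mapping.single (f a b) (Poly_Mapping.lookup p a * Poly_Mapping.lookup q b)))"
    by (rule UN_mono[OF subset_refl keys_sum])
  also have "\<dots> \<subseteq> (\<lambda>(a,b). f a b) ` (Poly_Mapping.keys p \<times> Poly_Mapping.keys q)"
    by (auto split: if_splits)
  finally show ?thesis .
qed

lemma pm_nat_add_eq_0: "(a::'b \<Rightarrow>\<^sub>0 nat) + b = 0 \<longleftrightarrow> a = 0 \<and> b = 0"
  by (auto simp: poly_mapping_eq_iff fun_eq_iff lookup_add)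

lemma tri_carrier_iff: "p \<in> tri_carrier \<longleftrightarrow> (\<forall>mn\<in>Poly_Mapping.keys p. fst mn \<noteq> 0)"
  by (simp add: tri_carrier_def)

lemma tri_trialgebra:
  "comm_trialgebra (smult_pm :: 'k::comm_ring_1 \<Rightarrow> ('b, 'k) tri \<Rightarrow> ('b, 'k) tri) tri_carrier tri_star tri_bullet"
proof -
  have mod1: "smult_pm a (x + y) = smult_pm a x + smult_pm a y
      \<and> smult_pm (a + b) x = smult_pm a x + smult_pm b x \<and>
        smult_pm a (smult_pm b x) = smult_pm (a * b) x \<and> smult_pm 1 x = x" for a b :: 'k and x y :: "('b,'k) tri"
    by (auto simp: poly_mapping_eq_iff fun_eq_iff lookup_add algebra_simps)
  have c0: "(0::('b,'k) tri) \<in> tri_carrier" by (simp add: tri_carrier_iff)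
  have cadd: "x + y \<in> tri_carrier" if "x \<in> tri_carrier" "y \<in> tri_carrier" for x y :: "('b,'k) tri"
    using that keys_add[of x y] unfolding tri_carrier_iff by blast
  have csm: "smult_pm c x \<in> tri_carrier" if "x \<in> tri_carrier" for c and x :: "('b,'k) tri"
    using that keys_smult_pm[of c x] unfolding tri_carrier_iff by blast
  have cst: "tri_star x y \<in> tri_carrier" if "x \<in> tri_carrier" "y \<in> tri_carrier" for x y :: "('b,'k) tri"
    using that keys_bilin_ext[of "\<lambda>(m, n) (m', n'). (m, n + m' + n')" x y] unfolding tri_carrier_iff tri_star_def
    by fastforce
  have cbu: "tri_bullet x y \<in> tri_carrier" if "x \<in> tri_carrier" "y \<in> tri_carrier" for x y :: "('b,'k) tri"
    using that keys_bilin_ext[of "\<lambda>(m, n) (m', n'). (m + m', n + n')" x y] unfolding tri_carrier_iff tri_bullet_def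
    by (fastforce simp: pm_nat_add_eq_0)
  have bil: "bilinear_on smult_pm (tri_carrier :: ('b,'k) tri set) (bilin_ext f)" for f
    by (simp add: bilinear_on_def bilin_ext_add_left bilin_ext_add_right bilin_ext_smult_left bilin_ext_smult_right)
  have ax1: "tri_star (tri_star x y) z = tri_star x (tri_star y z)" for x y z :: "('b,'k) tri"
    unfolding tri_star_def bilin_ext_triple_left bilin_ext_triple_right
    by (intro sum.cong refl) (auto simp: split_beta algebra_simps)
  have ax2: "tri_star x (tri_star y z) = tri_star x (tri_star z y)" for x y z :: "('b,'k) tri"
    unfolding tri_star_def bilin_ext_triple_left bilin_ext_triple_right
    apply (rule sum.cong[OF refl])
    apply (rule trans[OF _ sum.swap])
    apply (intro sum.cong refl)
    apply (auto simp: split_beta algebra_simps)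
    done
  have ax3: "tri_bullet x y = tri_bullet y x" for x y :: "('b,'k) tri"
    unfolding tri_bullet_def bilin_ext_def
    apply (subst sum.swap)
    apply (intro sum.cong refl)
    apply (auto simp: split_beta algebra_simps)
    done
  have ax4: "tri_bullet (tri_bullet x y) z = tri_bullet x (tri_bullet y z)" for x y z :: "('b,'k) tri"
    unfolding tri_bullet_def bilin_ext_triple_left bilin_ext_triple_right
    by (intro sum.cong refl) (auto simp: split_beta algebra_simps)
  have ax5: "tri_star x (tri_bullet y z) = tri_star x (tri_star y z)" for x y z :: "('b,'k) tri"
    unfolding tri_bullet_def tri_star_def bilin_ext_triple_left bilin_ext_triple_right
    by (intro sum.cong refl) (auto simp: split_beta algebra_simps)
  have ax6: "tri_star (tri_bullet x y) z = tri_bullet x (tri_star y z)" for x y z :: "('b,'k) tri"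
    unfolding tri_bullet_def tri_star_def bilin_ext_triple_left bilin_ext_triple_right
    by (intro sum.cong refl) (auto simp: split_beta algebra_simps)
  show ?thesis
    unfolding comm_trialgebra_def
    apply (intro conjI ballI allI)
    using mod1 c0 cadd csm cst cbu bil[of "\<lambda>(m, n) (m', n'). (m, n + m' + n')"]
      bil[of "\<lambda>(m, n) (m', n'). (m + m', n + n')"] ax1 ax2 ax3 ax4 ax5 ax6
    unfolding tri_star_def[symmetric] tri_bullet_def[symmetric]
    by simp_all
qed




lemma pm_sum_single: "(\<Sum>k\<in>Poly_Mapping.keys p. Poly_Mapping.single k (Poly_Mapping.lookup p k)) = p"
  by (rule poly_mapping_eqI) (auto simp: lookup_sum lookup_single when_def in_keys_iff)

lemma pm_sum_single_sup: "finite S \<Longrightarrow> Poly_Mapping.keys p \<subseteq> S \<Longrightarrow> (\<Sum>k\<in>S. Poly_Mapping.single k (Poly_Mapping.lookup p k)) = p"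
proof -
  assume a: "finite S" "Poly_Mapping.keys p \<subseteq> S"
  have "(\<Sum>k\<in>S. Poly_Mapping.single k (Poly_Mapping.lookup p k)) = (\<Sum>k\<in>Poly_Mapping.keys p. Poly_Mapping.single k (Poly_Mapping.lookup p k))"
    by (rule sum.mono_neutral_right) (use a in \<open>auto simp: in_keys_iff\<close>)
  then show ?thesis by (simp add: pm_sum_single)
qed

definition toM :: "('b \<Rightarrow>\<^sub>0 nat) \<Rightarrow> 'b multiset" where
  "toM n = Abs_multiset (Poly_Mapping.lookup n)"

lemma count_toM [simp]: "count (toM n) = Poly_Mapping.lookup n"
  unfolding toM_def by (rule count_Abs_multiset) simp

lemma toM_add [simp]: "toM (a + b) = toM a + toM b"
  by (rule multiset_eqI) (simp add: lookup_add)

lemma toM_single [simp]: "toM (Poly_Mapping.single b 1) = {#b#}"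
proof (rule multiset_eqI)
  fix x show "count (toM (Poly_Mapping.single b 1)) x = count {#b#} x"
    unfolding count_toM lookup_single by (cases "x = b") auto
qed

lemma toM_zero_iff [simp]: "toM n = {#} \<longleftrightarrow> n = 0"
  by (auto simp: multiset_eq_iff poly_mapping_eq_iff fun_eq_iff)

lemma pm_induct_aux: "\<forall>n. toM n = M \<longrightarrow> P n" if "P 0" "\<And>n b. P n \<Longrightarrow> P (n + Poly_Mapping.single b 1)"
  for P :: "('b \<Rightarrow>\<^sub>0 nat) \<Rightarrow> bool"
proof (induction M)
  case empty
  then show ?case using that(1) by auto
next
  case (add b M)
  show ?case
  proof (intro allI impI)
    fix n assume n: "toM n = add_mset b M"
    define n' where "n' = n - Poly_Mapping.single b 1"
    have "count (toM n) b = count (add_mset b M) b" using n by (simp only:)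
    then have nb: "Poly_Mapping.lookup n b \<ge> 1" by simp
    have e1: "n = n' + Poly_Mapping.single b 1"
    proof (rule poly_mapping_eqI)
      fix x show "Poly_Mapping.lookup n x = Poly_Mapping.lookup (n' + Poly_Mapping.single b 1) x"
        unfolding n'_def lookup_add lookup_minus lookup_single using nb by (cases "x = b") auto
    qed
    have "count (toM n') x = count M x" for x
    proof -
      have "count (toM n) x = count (add_mset b M) x" using n by (simp only:)
      then have "Poly_Mapping.lookup n x = count (add_mset b M) x" by simp
      then show ?thesis
        unfolding n'_def count_toM lookup_minus lookup_single by (cases "x = b") auto
    qed
    then have "toM n' = M" by (rule multiset_eqI)
    then have "P n'" using add.IH by blast
    then have "P (n' + Poly_Mapping.single b 1)" by (rule that(2))
    then show "P n" using e1 by simp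
  qed
qed

lemma pm_induct: "P 0 \<Longrightarrow> (\<And>n b. P n \<Longrightarrow> P (n + Poly_Mapping.single b 1)) \<Longrightarrow> P n"
  for P :: "('b \<Rightarrow>\<^sub>0 nat) \<Rightarrow> bool"
  using pm_induct_aux[of P "toM n"] by blast

lemma single_one_ne0: "Poly_Mapping.single b (1::nat) \<noteq> 0"
  by (metis lookup_single_eq lookup_zero one_neq_zero)

lemma single_Suc0_ne0 [simp]: "Poly_Mapping.single b (Suc 0) \<noteq> 0"
  using single_one_ne0 by simp




context
  fixes s :: "'k::comm_ring_1 \<Rightarrow> 't::ab_group_add \<Rightarrow> 't" and C :: "'t set" and m d :: "'t \<Rightarrow> 't \<Rightarrow> 't"
    and e :: "'b \<Rightarrow> 't"
  assumes T: "comm_trialgebra s C m d" and eC: "\<And>b. e b \<in> C"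
begin

lemma sadd: "x \<in> C \<Longrightarrow> y \<in> C \<Longrightarrow> s a (x + y) = s a x + s a y"
  and sadd2: "x \<in> C \<Longrightarrow> s (a + b) x = s a x + s b x"
  and smul: "x \<in> C \<Longrightarrow> s a (s b x) = s (a * b) x"
  and sone: "x \<in> C \<Longrightarrow> s 1 x = x"
  and C0: "0 \<in> C" and Cadd: "x \<in> C \<Longrightarrow> y \<in> C \<Longrightarrow> x + y \<in> C"
  and Cs: "x \<in> C \<Longrightarrow> s c x \<in> C"
  and Cm: "x \<in> C \<Longrightarrow> y \<in> C \<Longrightarrow> m x y \<in> C"
  and Cd: "x \<in> C \<Longrightarrow> y \<in> C \<Longrightarrow> d x y \<in> C"
  and bm: "bilinear_on s C m" and bd: "bilinear_on s C d"
  and massoc: "x \<in> C \<Longrightarrow> y \<in> C \<Longrightarrow> z \<in> C \<Longrightarrow> m (m x y) z = m x (m y z)"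
  and mcomm: "x \<in> C \<Longrightarrow> y \<in> C \<Longrightarrow> z \<in> C \<Longrightarrow> m x (m y z) = m x (m z y)"
  and dcomm: "x \<in> C \<Longrightarrow> y \<in> C \<Longrightarrow> d x y = d y x"
  and dassoc: "x \<in> C \<Longrightarrow> y \<in> C \<Longrightarrow> z \<in> C \<Longrightarrow> d (d x y) z = d x (d y z)"
  and md: "x \<in> C \<Longrightarrow> y \<in> C \<Longrightarrow> z \<in> C \<Longrightarrow> m x (d y z) = m x (m y z)"
  and dm: "x \<in> C \<Longrightarrow> y \<in> C \<Longrightarrow> z \<in> C \<Longrightarrow> m (d x y) z = d x (m y z)"
  using T unfolding comm_trialgebra_def by blast+

lemma s0: "x \<in> C \<Longrightarrow> s 0 x = 0"
  using sadd2[of x 0 0] by simp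

lemma s_zero: "s a 0 = 0"
  using sadd[OF C0 C0, of a] by simp

lemma Csum: "(\<And>i. i \<in> I \<Longrightarrow> x i \<in> C) \<Longrightarrow> sum x I \<in> C"
  by (induction I rule: infinite_finite_induct) (auto simp: C0 Cadd)

lemma s_sum: "(\<And>i. i \<in> I \<Longrightarrow> x i \<in> C) \<Longrightarrow> s a (sum x I) = (\<Sum>i\<in>I. s a (x i))"
  by (induction I rule: infinite_finite_induct) (auto simp: s_zero sadd Csum)

lemma bil_facts:
  assumes "bilinear_on s C M" "x \<in> C" "y \<in> C" "z \<in> C"
  shows "M (x + y) z = M x z + M y z" "M x (y + z) = M x y + M x z"
    "M (s c x) y = s c (M x y)" "M x (s c y) = s c (M x y)"
  using assms unfolding bilinear_on_def by blast+

lemma bil_zero: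
  assumes "bilinear_on s C M" "x \<in> C"
  shows "M 0 x = 0" "M x 0 = 0"
  using bil_facts(1)[OF assms(1) C0 C0 assms(2)] bil_facts(2)[OF assms(1) assms(2) C0 C0] by simp_all

lemma bil_sum_left:
  assumes "bilinear_on s C M" "\<And>x y. x \<in> C \<Longrightarrow> y \<in> C \<Longrightarrow> M x y \<in> C" "\<And>i. i \<in> I \<Longrightarrow> x i \<in> C" "y \<in> C"
  shows "M (sum x I) y = (\<Sum>i\<in>I. M (x i) y)"
  using assms(3)
  by (induction I rule: infinite_finite_induct) (auto simp: bil_zero[OF assms(1) assms(4)] bil_facts(1)[OF assms(1)] Csum assms(4))

lemma bil_sum_right:
  assumes "bilinear_on s C M" "\<And>x y. x \<in> C \<Longrightarrow> y \<in> C \<Longrightarrow> M x y \<in> C" "\<And>i. i \<in> I \<Longrightarrow> y i \<in> C" "x \<in> C"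
  shows "M x (sum y I) = (\<Sum>i\<in>I. M x (y i))"
  using assms(3)
  by (induction I rule: infinite_finite_induct) (auto simp: bil_zero[OF assms(1) assms(4)] bil_facts(2)[OF assms(1)] Csum assms(4))

definition Fd :: "'b \<Rightarrow> 't option \<Rightarrow> 't option" where
  "Fd b z = (case z of None \<Rightarrow> Some (e b) | Some x \<Rightarrow> Some (if x \<in> C then d x (e b) else x))"

definition Fs :: "'b \<Rightarrow> 't \<Rightarrow> 't" where
  "Fs b x = (if x \<in> C then m x (e b) else x)"

lemma Fd_None [simp]: "Fd b None = Some (e b)" by (simp add: Fd_def)
lemma Fd_SomeC [simp]: "x \<in> C \<Longrightarrow> Fd b (Some x) = Some (d x (e b))" by (simp add: Fd_def)
lemma Fs_C [simp]: "x \<in> C \<Longrightarrow> Fs b x = m x (e b)" by (simp add: Fs_def)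

lemma Fd_cfc: "comp_fun_commute Fd"
proof
  fix x y
  show "Fd y \<circ> Fd x = Fd x \<circ> Fd y"
  proof
    fix z show "(Fd y \<circ> Fd x) z = (Fd x \<circ> Fd y) z"
    proof (cases z)
      case None
      then show ?thesis using eC by (simp add: Fd_def dcomm Cd)
    next
      case (Some w)
      have "w \<in> C \<Longrightarrow> d (d w (e x)) (e y) = d (d w (e y)) (e x)"
        using eC by (metis dassoc dcomm)
      then show ?thesis using eC Some by (simp add: Fd_def Cd)
    qed
  qed
qed

lemma Fs_cfc: "comp_fun_commute Fs"
proof
  fix x y
  show "Fs y \<circ> Fs x = Fs x \<circ> Fs y"
  proof
    fix z show "(Fs y \<circ> Fs x) z = (Fs x \<circ> Fs y) z"
      using eC by (simp add: Fs_def massoc Cm) (metis mcomm eC)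
  qed
qed

lemmas Fd_add = comp_fun_commute.fold_mset_add_mset[OF Fd_cfc]
lemmas Fs_add = comp_fun_commute.fold_mset_add_mset[OF Fs_cfc]
lemmas Fs_union = comp_fun_commute.fold_mset_union[OF Fs_cfc]
lemmas Fd_union = comp_fun_commute.fold_mset_union[OF Fd_cfc]

definition P :: "'b multiset \<Rightarrow> 't" where
  "P M = the (fold_mset Fd None M)"

lemma P_fold: "M \<noteq> {#} \<Longrightarrow> fold_mset Fd None M = Some (P M) \<and> P M \<in> C"
proof (induction M)
  case empty then show ?case by simp
next
  case (add b M)
  show ?case
  proof (cases "M = {#}")
    case True then show ?thesis by (simp add: P_def eC)
  next
    case False
    from add.IH[OF False] have h: "fold_mset Fd None M = Some (P M)" "P M \<in> C" by auto
    have X: "fold_mset Fd None (add_mset b M) = Some (d (P M) (e b))" using h by (simp add: Fd_add)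
    have "P (add_mset b M) = d (P M) (e b)" by (simp only: P_def[of "add_mset b M"] X option.sel)
    then show ?thesis using X h eC Cd by simp
  qed
qed

lemma PC: "M \<noteq> {#} \<Longrightarrow> P M \<in> C" using P_fold by blast

lemma P_single: "P {#b#} = e b" by (simp add: P_def)

lemma P_add: "M \<noteq> {#} \<Longrightarrow> P (add_mset b M) = d (P M) (e b)"
proof -
  assume "M \<noteq> {#}"
  from P_fold[OF this] have h: "fold_mset Fd None M = Some (P M)" "P M \<in> C" by auto
  have X: "fold_mset Fd None (add_mset b M) = Some (d (P M) (e b))" using h by (simp add: Fd_add)
  show ?thesis by (simp only: P_def[of "add_mset b M"] X option.sel)
qed

lemma Fd_Some: "x \<in> C \<Longrightarrow> N \<noteq> {#} \<Longrightarrow> fold_mset Fd (Some x) N = Some (d x (P N))"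
proof (induction N)
  case empty then show ?case by simp
next
  case (add b N)
  show ?case
  proof (cases "N = {#}")
    case True then show ?thesis using add.prems by (simp add: P_single)
  next
    case False
    then show ?thesis using add eC PC by (simp add: Fd_add P_add Cd dassoc)
  qed
qed

lemma P_union: "M \<noteq> {#} \<Longrightarrow> N \<noteq> {#} \<Longrightarrow> P (M + N) = d (P M) (P N)"
proof -
  assume a: "M \<noteq> {#}" "N \<noteq> {#}"
  from P_fold[OF a(1)] have h: "fold_mset Fd None M = Some (P M)" "P M \<in> C" by auto
  have X: "fold_mset Fd None (M + N) = Some (d (P M) (P N))" using h Fd_Some[of "P M" N] a by (simp add: Fd_union)
  show ?thesis by (simp only: P_def[of "M + N"] X option.sel)
qed

lemma R_C: "x \<in> C \<Longrightarrow> fold_mset Fs x N \<in> C"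
  by (induction N) (auto simp: Fs_add Cm eC)

lemma R_m: "A \<in> C \<Longrightarrow> x \<in> C \<Longrightarrow> m A (fold_mset Fs x N) = fold_mset Fs (m A x) N"
proof (induction N)
  case empty then show ?case by simp
next
  case (add b N)
  have "m A (fold_mset Fs x (add_mset b N)) = m A (m (fold_mset Fs x N) (e b))"
    using add R_C by (simp add: Fs_add)
  also have "\<dots> = m (m A (fold_mset Fs x N)) (e b)" using add.prems R_C eC by (intro massoc[symmetric]) auto
  also have "\<dots> = fold_mset Fs (m A x) (add_mset b N)" using add R_C Cm by (simp add: Fs_add)
  finally show ?case .
qed

lemma R_P: "A \<in> C \<Longrightarrow> M \<noteq> {#} \<Longrightarrow> m A (P M) = fold_mset Fs A M"
proof (induction M)
  case empty then show ?case by simp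
next
  case (add b M)
  show ?case
  proof (cases "M = {#}")
    case True then show ?thesis using add.prems by (simp add: P_single)
  next
    case False
    have "m A (P (add_mset b M)) = m A (m (P M) (e b))" using False add.prems PC eC by (simp add: P_add md)
    also have "\<dots> = m (m A (P M)) (e b)" using False add.prems PC eC by (intro massoc[symmetric]) auto
    also have "\<dots> = fold_mset Fs A (add_mset b M)" using False add PC eC R_C Cm by (simp add: Fs_add)
    finally show ?thesis .
  qed
qed

lemma R_d: "x \<in> C \<Longrightarrow> y \<in> C \<Longrightarrow> d x (fold_mset Fs y N) = fold_mset Fs (d x y) N"
proof (induction N)
  case empty then show ?case by simp
next
  case (add b N)
  have "d x (fold_mset Fs y (add_mset b N)) = d x (m (fold_mset Fs y N) (e b))"
    using add R_C by (simp add: Fs_add)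
  also have "\<dots> = m (d x (fold_mset Fs y N)) (e b)" using add.prems R_C eC by (intro dm[symmetric]) auto
  also have "\<dots> = fold_mset Fs (d x y) (add_mset b N)" using add R_C Cd by (simp add: Fs_add)
  finally show ?case .
qed

lemma toM_0 [simp]: "toM 0 = {#}" by simp

definition G :: "('b \<Rightarrow>\<^sub>0 nat) \<times> ('b \<Rightarrow>\<^sub>0 nat) \<Rightarrow> 't" where
  "G k = (if fst k = 0 then 0 else fold_mset Fs (P (toM (fst k))) (toM (snd k)))"

lemma GC: "G k \<in> C"
  by (auto simp: G_def C0 R_C PC)

lemma G_star: "a \<noteq> 0 \<Longrightarrow> a' \<noteq> 0 \<Longrightarrow> G (a, n + a' + n') = m (G (a, n)) (G (a', n'))"
  using PC[of "toM a"] PC[of "toM a'"]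
  by (simp add: G_def Fs_union R_m R_P R_C)

lemma G_bullet: "a \<noteq> 0 \<Longrightarrow> a' \<noteq> 0 \<Longrightarrow> G (a + a', n + n') = d (G (a, n)) (G (a', n'))"
proof -
  assume a: "a \<noteq> 0" "a' \<noteq> 0"
  let ?X = "P (toM a)" and ?Y = "P (toM a')"
  have XY: "?X \<in> C" "?Y \<in> C" using PC a by auto
  have "d (G (a, n)) (G (a', n')) = fold_mset Fs (d (fold_mset Fs ?X (toM n)) ?Y) (toM n')"
    using a XY by (simp add: G_def R_d R_C)
  also have "\<dots> = fold_mset Fs (d ?Y (fold_mset Fs ?X (toM n))) (toM n')"
    using XY R_C by (simp add: dcomm)
  also have "\<dots> = fold_mset Fs (fold_mset Fs (d ?Y ?X) (toM n)) (toM n')"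
    using XY by (simp add: R_d)
  also have "\<dots> = fold_mset Fs (fold_mset Fs (d ?X ?Y) (toM n)) (toM n')"
    using XY dcomm[of ?Y ?X] by simp
  also have "\<dots> = G (a + a', n + n')"
    using a XY by (simp add: G_def P_union pm_nat_add_eq_0 Fs_union)
  finally show ?thesis by simp
qed


lemma G_gen: "G (Poly_Mapping.single b 1, 0) = e b"
  unfolding G_def fst_conv snd_conv toM_single using single_one_ne0[of b] by (simp add: P_single)

definition gl :: "('b, 'k) tri \<Rightarrow> 't" where
  "gl p = (\<Sum>k\<in>Poly_Mapping.keys p. s (Poly_Mapping.lookup p k) (G k))"

lemma gl_sup: "finite S \<Longrightarrow> Poly_Mapping.keys p \<subseteq> S \<Longrightarrow> gl p = (\<Sum>k\<in>S. s (Poly_Mapping.lookup p k) (G k))"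
  unfolding gl_def by (rule sum.mono_neutral_left) (auto simp: in_keys_iff s0 GC)

lemma gl_C: "gl p \<in> C"
  unfolding gl_def by (intro Csum Cs GC)

lemma gl_add: "gl (p + q) = gl p + gl q"
proof -
  let ?S = "Poly_Mapping.keys p \<union> Poly_Mapping.keys q \<union> Poly_Mapping.keys (p + q)"
  show ?thesis
    by (subst (1 2 3) gl_sup[where S = ?S]) (auto simp: lookup_add sadd2 GC sum.distrib)
qed

lemma gl_0: "gl 0 = 0" by (simp add: gl_def)

lemma gl_smult: "gl (smult_pm c p) = s c (gl p)"
  apply (subst (1 2) gl_sup[where S = "Poly_Mapping.keys p"])
  using keys_smult_pm[of c p] apply (auto simp: s_sum Cs GC smul)
  done

lemma gl_single: "gl (Poly_Mapping.single k c) = s c (G k)"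
  by (subst gl_sup[where S = "{k}"]) auto

lemma gl_sum: "gl (sum F I) = (\<Sum>i\<in>I. gl (F i))"
  by (induction I rule: infinite_finite_induct) (auto simp: gl_0 gl_add)

lemma gl_bilin:
  assumes bM: "bilinear_on s C M" and CM: "\<And>x y. x \<in> C \<Longrightarrow> y \<in> C \<Longrightarrow> M x y \<in> C"
    and GM: "\<And>a b. a \<in> K \<Longrightarrow> b \<in> K \<Longrightarrow> G (f a b) = M (G a) (G b)"
    and p: "Poly_Mapping.keys p \<subseteq> K" and q: "Poly_Mapping.keys q \<subseteq> K"
  shows "gl (bilin_ext f p q) = M (gl p) (gl q)"
proof -
  have "gl (bilin_ext f p q) = (\<Sum>a\<in>Poly_Mapping.keys p. \<Sum>b\<in>Poly_Mapping.keys q.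
      s (Poly_Mapping.lookup p a * Poly_Mapping.lookup q b) (M (G a) (G b)))"
    unfolding bilin_ext_def gl_sum gl_single
    apply (intro sum.cong refl)
    apply (subst GM)
    using p q by auto
  also have "\<dots> = (\<Sum>a\<in>Poly_Mapping.keys p. \<Sum>b\<in>Poly_Mapping.keys q.
      M (s (Poly_Mapping.lookup p a) (G a)) (s (Poly_Mapping.lookup q b) (G b)))"
  proof (intro sum.cong refl)
    fix a b
    have "M (s (Poly_Mapping.lookup p a) (G a)) (s (Poly_Mapping.lookup q b) (G b))
       = s (Poly_Mapping.lookup p a) (M (G a) (s (Poly_Mapping.lookup q b) (G b)))"
      by (rule bil_facts(3)[OF bM GC Cs[OF GC] GC])
    also have "\<dots> = s (Poly_Mapping.lookup p a) (s (Poly_Mapping.lookup q b) (M (G a) (G b)))"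
      by (subst bil_facts(4)[OF bM GC GC GC]) (rule refl)
    also have "\<dots> = s (Poly_Mapping.lookup p a * Poly_Mapping.lookup q b) (M (G a) (G b))"
      by (rule smul[OF CM[OF GC GC]])
    finally show "s (Poly_Mapping.lookup p a * Poly_Mapping.lookup q b) (M (G a) (G b)) =
      M (s (Poly_Mapping.lookup p a) (G a)) (s (Poly_Mapping.lookup q b) (G b))" by simp
  qed
  also have "\<dots> = M (gl p) (gl q)"
    unfolding gl_def
    by (simp add: bil_sum_left[OF bM CM] bil_sum_right[OF bM CM] Csum Cs GC) (rule sum.swap)
  finally show ?thesis .
qed

lemma gl_hom: "trialgebra_hom smult_pm tri_carrier tri_star tri_bullet s C m d gl"
proof -
  let ?K = "{k :: ('b \<Rightarrow>\<^sub>0 nat) \<times> ('b \<Rightarrow>\<^sub>0 nat). fst k \<noteq> 0}"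
  have K: "Poly_Mapping.keys x \<subseteq> ?K" if "x \<in> tri_carrier" for x :: "('b,'k) tri"
    using that unfolding tri_carrier_iff by auto
  have st: "gl (tri_star x y) = m (gl x) (gl y)" if "x \<in> tri_carrier" "y \<in> tri_carrier" for x y :: "('b,'k) tri"
    unfolding tri_star_def
    by (rule gl_bilin[OF bm Cm _ K[OF that(1)] K[OF that(2)]]) (auto simp: G_star)
  have bu: "gl (tri_bullet x y) = d (gl x) (gl y)" if "x \<in> tri_carrier" "y \<in> tri_carrier" for x y :: "('b,'k) tri"
    unfolding tri_bullet_def
    by (rule gl_bilin[OF bd Cd _ K[OF that(1)] K[OF that(2)]]) (auto simp: G_bullet)
  show ?thesis unfolding trialgebra_hom_def using st bu by (simp add: gl_C gl_add gl_smult)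
qed

lemma gl_incl: "gl (tri_incl v) = (\<Sum>b\<in>Poly_Mapping.keys v. s (Poly_Mapping.lookup v b) (e b))"
  unfolding tri_incl_def gl_sum gl_single G_gen ..

lemma carrier_single: "fst k \<noteq> 0 \<Longrightarrow> Poly_Mapping.single k c \<in> tri_carrier"
  by (auto simp: tri_carrier_iff split: if_splits)

lemma hom_single:
  assumes H: "trialgebra_hom smult_pm tri_carrier tri_star tri_bullet s C m d H"
    and gen: "\<And>b. H (Poly_Mapping.single (Poly_Mapping.single b 1, 0) 1) = e b"
    and a: "a \<noteq> 0"
  shows "H (Poly_Mapping.single (a, n) 1) = G (a, n)"
proof -
  have Hm: "H (tri_star x y) = m (H x) (H y)" "H (tri_bullet x y) = d (H x) (H y)"
    if "x \<in> tri_carrier" "y \<in> tri_carrier" for x y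
    using H that unfolding trialgebra_hom_def by blast+
  have base: "a \<noteq> 0 \<longrightarrow> H (Poly_Mapping.single (a, 0) 1) = G (a, 0)" for a
  proof (induction a rule: pm_induct)
    case 1 then show ?case by simp
  next
    case (2 n b)
    show ?case
    proof (cases "n = 0")
      case True then show ?thesis using gen G_gen by simp
    next
      case False
      have "Poly_Mapping.single (n + Poly_Mapping.single b 1, 0) 1
          = tri_bullet (Poly_Mapping.single (n, 0) 1) (Poly_Mapping.single (Poly_Mapping.single b 1, 0) (1::'k))"
        by (simp add: tri_bullet_def bilin_ext_single_left)
      have c1: "Poly_Mapping.single (n, 0) (1::'k) \<in> tri_carrier" by (rule carrier_single) (simp add: False)
      have c2: "Poly_Mapping.single (Poly_Mapping.single b 1, 0) (1::'k) \<in> tri_carrier"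
        by (rule carrier_single) (simp add: single_one_ne0)
      have "H (Poly_Mapping.single (n + Poly_Mapping.single b 1, 0) 1) = d (G (n, 0)) (e b)"
        unfolding \<open>Poly_Mapping.single (n + Poly_Mapping.single b 1, 0) 1 = _\<close> Hm(2)[OF c1 c2]
        using 2 gen False by simp
      also have "\<dots> = G (n + Poly_Mapping.single b 1, 0 + 0)"
        using G_bullet[OF False single_one_ne0[of b], of 0 0] G_gen by simp
      finally show ?thesis by simp
    qed
  qed
  show ?thesis
  proof (induction n rule: pm_induct)
    case 1 then show ?case using base a by simp
  next
    case (2 n b)
    have "Poly_Mapping.single (a, n + Poly_Mapping.single b 1) 1
        = tri_star (Poly_Mapping.single (a, n) 1) (Poly_Mapping.single (Poly_Mapping.single b 1, 0) (1::'k))"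
      by (simp add: tri_star_def bilin_ext_single_left)
    have c1: "Poly_Mapping.single (a, n) (1::'k) \<in> tri_carrier" by (rule carrier_single) (simp add: a)
    have c2: "Poly_Mapping.single (Poly_Mapping.single b 1, 0) (1::'k) \<in> tri_carrier"
      by (rule carrier_single) (simp add: single_one_ne0)
    have "H (Poly_Mapping.single (a, n + Poly_Mapping.single b 1) 1) = m (G (a, n)) (e b)"
      unfolding \<open>Poly_Mapping.single (a, n + Poly_Mapping.single b 1) 1 = _\<close> Hm(1)[OF c1 c2]
      using 2 gen by simp
    also have "\<dots> = G (a, n + Poly_Mapping.single b 1 + 0)"
      using G_star[OF a single_one_ne0[of b], of n 0] G_gen by simp
    finally show ?case by simp
  qed
qed

lemma hom_unique:
  assumes H: "trialgebra_hom smult_pm tri_carrier tri_star tri_bullet s C m d H"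
    and gen: "\<And>b. H (Poly_Mapping.single (Poly_Mapping.single b 1, 0) 1) = e b"
    and x: "x \<in> tri_carrier"
  shows "H x = gl x"
proof -
  have Hadd: "H (u + v) = H u + H v" if "u \<in> tri_carrier" "v \<in> tri_carrier" for u v
    using H that unfolding trialgebra_hom_def by blast
  have Hs: "H (smult_pm c u) = s c (H u)" if "u \<in> tri_carrier" for u c
    using H that unfolding trialgebra_hom_def by blast
  have c0: "(0::('b,'k) tri) \<in> tri_carrier" by (simp add: tri_carrier_iff)
  have H0: "H 0 = 0" using Hadd[OF c0 c0] by simp
  have Hsing: "H (Poly_Mapping.single k c) = s c (G k)" if "fst k \<noteq> 0" for k c
  proof -
    have "H (Poly_Mapping.single k c) = H (smult_pm c (Poly_Mapping.single k 1))" by simp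
    also have "\<dots> = s c (H (Poly_Mapping.single k 1))" using Hs carrier_single that by blast
    also have "H (Poly_Mapping.single k 1) = G k"
      using hom_single[OF H gen, of "fst k" "snd k"] that by simp
    finally show ?thesis .
  qed
  have K: "fst k \<noteq> 0" if "k \<in> Poly_Mapping.keys x" for k using x that by (simp add: tri_carrier_iff)
  have "S \<subseteq> Poly_Mapping.keys x \<Longrightarrow> (\<Sum>k\<in>S. Poly_Mapping.single k (Poly_Mapping.lookup x k)) \<in> tri_carrier
      \<and> H (\<Sum>k\<in>S. Poly_Mapping.single k (Poly_Mapping.lookup x k)) = (\<Sum>k\<in>S. s (Poly_Mapping.lookup x k) (G k))" for S
  proof (induction S rule: infinite_finite_induct)
    case (infinite A) then show ?case using c0 H0 by simp
  next
    case empty then show ?case using c0 H0 by simp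
  next
    case (insert k F)
    have kc: "Poly_Mapping.single k (Poly_Mapping.lookup x k) \<in> tri_carrier"
      using insert.prems K carrier_single by blast
    have cadd: "u + v \<in> tri_carrier" if "u \<in> tri_carrier" "v \<in> tri_carrier" for u v :: "('b,'k) tri"
      using that keys_add[of u v] unfolding tri_carrier_iff by blast
    show ?case using insert kc cadd Hadd Hsing[OF K] by simp
  qed
  from this[OF subset_refl] show ?thesis by (simp add: pm_sum_single gl_def)
qed

end

lemma single_one_eq_iff: "Poly_Mapping.single b' (1::nat) = Poly_Mapping.single b 1 \<longleftrightarrow> b' = b"
  by (metis lookup_single_eq lookup_single_not_eq zero_neq_one)

lemma tri_incl_sup: "finite S \<Longrightarrow> Poly_Mapping.keys v \<subseteq> S \<Longrightarrow>
  tri_incl v = (\<Sum>b\<in>S. Poly_Mapping.single (Poly_Mapping.single b 1, 0) (Poly_Mapping.lookup v b))"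
  unfolding tri_incl_def by (rule sum.mono_neutral_left) (auto simp: in_keys_iff)

lemma tri_incl_add: "tri_incl (u + v) = tri_incl u + tri_incl v"
proof -
  let ?S = "Poly_Mapping.keys u \<union> Poly_Mapping.keys v \<union> Poly_Mapping.keys (u + v)"
  show ?thesis
    by (subst (1 2 3) tri_incl_sup[where S = ?S]) (auto simp: lookup_add single_add sum.distrib)
qed

lemma tri_incl_smult: "tri_incl (smult_pm c v) = smult_pm c (tri_incl v)"
  apply (subst (1 2) tri_incl_sup[where S = "Poly_Mapping.keys v"])
  using keys_smult_pm[of c v] apply (auto simp: smult_pm_sum)
  done

lemma lookup_tri_incl: "Poly_Mapping.lookup (tri_incl v) (Poly_Mapping.single b 1, 0) = Poly_Mapping.lookup v b"
proof -
  have "Poly_Mapping.lookup (tri_incl v) (Poly_Mapping.single b 1, 0) =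
     (\<Sum>b'\<in>Poly_Mapping.keys v. if b' = b then Poly_Mapping.lookup v b' else 0)"
    unfolding tri_incl_def lookup_sum lookup_single
    by (intro sum.cong refl) (auto simp: when_def single_one_eq_iff single_one_eq_iff[simplified])
  also have "\<dots> = Poly_Mapping.lookup v b" by (auto simp: sum.delta' in_keys_iff)
  finally show ?thesis .
qed

lemma tri_incl_inj: "inj tri_incl"
proof (rule injI)
  fix u v assume "tri_incl u = tri_incl v"
  then have "Poly_Mapping.lookup u b = Poly_Mapping.lookup v b" for b
    by (metis lookup_tri_incl)
  then show "u = v" by (rule poly_mapping_eqI)
qed

lemma tri_incl_carrier: "tri_incl v \<in> tri_carrier" for v :: "'b \<Rightarrow>\<^sub>0 'k::comm_ring_1"
proof -
  have "Poly_Mapping.keys (tri_incl v) \<subseteq> (\<Union>b\<in>Poly_Mapping.keys v. Poly_Mapping.keys (Poly_Mapping.single (Poly_Mapping.single b 1, 0::'b \<Rightarrow>\<^sub>0 nat) (Poly_Mapping.lookup v b)))"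
    unfolding tri_incl_def by (rule keys_sum)
  then show ?thesis using single_one_ne0 unfolding tri_carrier_iff by (fastforce split: if_splits)
qed




lemma tri_incl_single: "tri_incl (Poly_Mapping.single b (1::'k::comm_ring_1)) = Poly_Mapping.single (Poly_Mapping.single b 1, 0) 1"
  by (simp add: tri_incl_def)

lemma f_expand:
  fixes f :: "('b \<Rightarrow>\<^sub>0 'k::comm_ring_1) \<Rightarrow> 't::ab_group_add"
  assumes fadd: "\<forall>u v. f (u + v) = f u + f v" and fsm: "\<forall>c v. f (smult_pm c v) = s c (f v)"
  shows "f v = (\<Sum>b\<in>Poly_Mapping.keys v. s (Poly_Mapping.lookup v b) (f (Poly_Mapping.single b 1)))"
proof -
  have "f (0 + 0) = f 0 + f 0" using fadd by blast
  then have f0: "f 0 = 0" by simp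
  have fsum: "f (sum F I) = (\<Sum>i\<in>I. f (F i))" for F :: "'b \<Rightarrow> 'b \<Rightarrow>\<^sub>0 'k" and I
    by (induction I rule: infinite_finite_induct) (auto simp: f0 fadd)
  have fs: "f (Poly_Mapping.single b c) = s c (f (Poly_Mapping.single b 1))" for b c
    using fsm[rule_format, of c "Poly_Mapping.single b 1"] by simp
  have "f v = f (\<Sum>b\<in>Poly_Mapping.keys v. Poly_Mapping.single b (Poly_Mapping.lookup v b))"
    by (simp add: pm_sum_single)
  also have "\<dots> = (\<Sum>b\<in>Poly_Mapping.keys v. s (Poly_Mapping.lookup v b) (f (Poly_Mapping.single b 1)))"
    unfolding fsum by (rule sum.cong[OF refl]) (rule fs)
  finally show ?thesis .
qed

theorem mainTheorem12:
  fixes s :: "'k::field_char_0 \<Rightarrow> 't::ab_group_add \<Rightarrow> 't"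
    and C :: "'t set" and m d :: "'t \<Rightarrow> 't \<Rightarrow> 't"
    and f :: "('b \<Rightarrow>\<^sub>0 'k) \<Rightarrow> 't"
  shows "comm_trialgebra (smult_pm :: 'k \<Rightarrow> ('b, 'k) tri \<Rightarrow> ('b, 'k) tri) tri_carrier tri_star tri_bullet
    \<and> inj (tri_incl :: ('b \<Rightarrow>\<^sub>0 'k) \<Rightarrow> ('b, 'k) tri)
    \<and> (\<forall>v. tri_incl v \<in> (tri_carrier :: ('b, 'k) tri set))
    \<and> (\<forall>u v. tri_incl (u + v) = (tri_incl u + tri_incl v :: ('b, 'k) tri))
    \<and> (\<forall>c v. tri_incl (smult_pm c v) = (smult_pm c (tri_incl v) :: ('b, 'k) tri))
    \<and> (comm_trialgebra s C m d \<and> (\<forall>v. f v \<in> C) \<and> (\<forall>u v. f (u + v) = f u + f v)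
         \<and> (\<forall>c v. f (smult_pm c v) = s c (f v))
       \<longrightarrow> (\<exists>g :: ('b, 'k) tri \<Rightarrow> 't.
             trialgebra_hom smult_pm tri_carrier tri_star tri_bullet s C m d g
             \<and> (\<forall>v. g (tri_incl v) = f v)
             \<and> (\<forall>h :: ('b, 'k) tri \<Rightarrow> 't.
                  trialgebra_hom smult_pm tri_carrier tri_star tri_bullet s C m d h
                  \<and> (\<forall>v. h (tri_incl v) = f v)
                  \<longrightarrow> (\<forall>x \<in> tri_carrier. h x = g x))))"
proof (intro conjI allI impI)
  show "comm_trialgebra (smult_pm :: 'k \<Rightarrow> ('b, 'k) tri \<Rightarrow> ('b, 'k) tri) tri_carrier tri_star tri_bullet"
    by (rule tri_trialgebra)
  show "inj (tri_incl :: ('b \<Rightarrow>\<^sub>0 'k) \<Rightarrow> ('b, 'k) tri)" by (rule tri_incl_inj)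
  show "tri_incl v \<in> (tri_carrier :: ('b, 'k) tri set)" for v :: "'b \<Rightarrow>\<^sub>0 'k" by (rule tri_incl_carrier)
  show "tri_incl (u + v) = (tri_incl u + tri_incl v :: ('b, 'k) tri)" for u v :: "'b \<Rightarrow>\<^sub>0 'k" by (rule tri_incl_add)
  show "tri_incl (smult_pm c v) = (smult_pm c (tri_incl v) :: ('b, 'k) tri)" for c and v :: "'b \<Rightarrow>\<^sub>0 'k"
    by (rule tri_incl_smult)
next
  assume A: "comm_trialgebra s C m d \<and> (\<forall>v. f v \<in> C) \<and> (\<forall>u v. f (u + v) = f u + f v)
         \<and> (\<forall>c v. f (smult_pm c v) = s c (f v))"
  then have T: "comm_trialgebra s C m d" and fC: "\<And>v. f v \<in> C"
    and fadd: "\<forall>u v. f (u + v) = f u + f v" and fsm: "\<forall>c v. f (smult_pm c v) = s c (f v)" by blast+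
  define e where "e b = f (Poly_Mapping.single b 1)" for b
  have eC: "\<And>b. e b \<in> C" unfolding e_def by (rule fC)
  note hom = gl_hom[OF T eC]
  note uniq = hom_unique[OF T eC]
  note incl = gl_incl[OF T eC]
  show "\<exists>g :: ('b, 'k) tri \<Rightarrow> 't.
             trialgebra_hom smult_pm tri_carrier tri_star tri_bullet s C m d g
             \<and> (\<forall>v. g (tri_incl v) = f v)
             \<and> (\<forall>h :: ('b, 'k) tri \<Rightarrow> 't.
                  trialgebra_hom smult_pm tri_carrier tri_star tri_bullet s C m d h
                  \<and> (\<forall>v. h (tri_incl v) = f v)
                  \<longrightarrow> (\<forall>x \<in> tri_carrier. h x = g x))"
  proof (intro exI conjI allI impI ballI)
    show "trialgebra_hom smult_pm tri_carrier tri_star tri_bullet s C m d (gl s C m d e)"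
      by (rule hom)
    show "gl s C m d e (tri_incl v) = f v" for v
      unfolding incl e_def using f_expand[OF fadd fsm, of v] by simp
    fix h :: "('b, 'k) tri \<Rightarrow> 't" and x :: "('b, 'k) tri"
    assume h: "trialgebra_hom smult_pm tri_carrier tri_star tri_bullet s C m d h \<and> (\<forall>v. h (tri_incl v) = f v)"
      and x: "x \<in> tri_carrier"
    have gen: "h (Poly_Mapping.single (Poly_Mapping.single b 1, 0) 1) = e b" for b
    proof -
      have "h (tri_incl (Poly_Mapping.single b 1)) = f (Poly_Mapping.single b 1)" using h by blast
      then show ?thesis by (simp only: tri_incl_single e_def)
    qed
    show "h x = gl s C m d e x"
    proof (rule uniq)
      show "trialgebra_hom smult_pm tri_carrier tri_star tri_bullet s C m d h" using h by blast
      show "h (Poly_Mapping.single (Poly_Mapping.single b 1, 0) 1) = e b" for b by (rule gen)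
      show "x \<in> tri_carrier" by (rule x)
    qed
  qed
qed


end
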